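(* Let $G$ be a graph with $n$ vertices and $m\ge 1$ edges. Then $$EE(G) > e^{R_{1/2}/m} + (n-1) - \frac{R_{1/2}}{m},$$ where $R_{1/2}=R_{1/2}(G)$.
   Context: All graphs are finite, simple and undirected. For a graph $G$ with adjacency matrix $A(G)$ having eigenvalues $\lambda_1\ge\cdots\ge\lambda_n$, the Estrada index is $EE(G)=\sum_{i=1}^n e^{\lambda_i}$. Writing $d(i)$ for the degree of vertex $i$ and $\mathcal{E}(G)$ for the edge set, $R_\alpha(G)=\sum_{ij\in\mathcal{E}(G)}(d(i)d(j))^\alpha$; in particular $R_{1/2}(G)=\sum_{ij\in\mathcal{E}(G)}\sqrt{d(i)d(j)}$. *)

theory Defs
  imports Complex_Main "Jordan_Normal_Form.Char_Poly"
begin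

definition simple_graph :: "nat \<Rightarrow> (nat \<Rightarrow> nat \<Rightarrow> bool) \<Rightarrow> bool" where
  "simple_graph n E \<longleftrightarrow> (\<forall>i j. E i j \<longrightarrow> i < n \<and> j < n \<and> i \<noteq> j \<and> E j i)"

definition edges :: "nat \<Rightarrow> (nat \<Rightarrow> nat \<Rightarrow> bool) \<Rightarrow> (nat \<times> nat) set" where
  "edges n E = {(i, j). i < j \<and> j < n \<and> E i j}"

definition degree :: "nat \<Rightarrow> (nat \<Rightarrow> nat \<Rightarrow> bool) \<Rightarrow> nat \<Rightarrow> nat" where
  "degree n E i = card {j. j < n \<and> E i j}"

definition adj_matrix :: "nat \<Rightarrow> (nat \<Rightarrow> nat \<Rightarrow> bool) \<Rightarrow> real mat" where
  "adj_matrix n E = mat n n (\<lambda>(i, j). if E i j then 1 else 0)"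

definition adj_eigenvalues :: "nat \<Rightarrow> (nat \<Rightarrow> nat \<Rightarrow> bool) \<Rightarrow> real multiset" where
  "adj_eigenvalues n E = proots (char_poly (adj_matrix n E))"

definition estrada_index :: "nat \<Rightarrow> (nat \<Rightarrow> nat \<Rightarrow> bool) \<Rightarrow> real" where
  "estrada_index n E = (\<Sum>x\<in>#adj_eigenvalues n E. exp x)"

definition randic_half :: "nat \<Rightarrow> (nat \<Rightarrow> nat \<Rightarrow> bool) \<Rightarrow> real" where
  "randic_half n E = (\<Sum>(i, j)\<in>edges n E. sqrt (real (degree n E i * degree n E j)))"

end

theory Submission
  imports Defs "Jordan_Normal_Form.Schur_Decomposition"
begin


definition mtr :: "real mat \<Rightarrow> real" where
  "mtr M = (\<Sum>i<dim_row M. M $$ (i,i))"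

lemma mtr_comm:
  assumes "A \<in> carrier_mat n m" "B \<in> carrier_mat m n"
  shows "mtr (A * B) = mtr (B * A)"
proof -
  have "mtr (A*B) = (\<Sum>i<n. \<Sum>k<m. A $$ (i,k) * B $$ (k,i))"
    using assms by (simp add: mtr_def scalar_prod_def atLeast0LessThan)
  also have "\<dots> = (\<Sum>k<m. \<Sum>i<n. B $$ (k,i) * A $$ (i,k))"
    by (subst sum.swap) (simp add: mult.commute)
  also have "\<dots> = mtr (B*A)"
    using assms by (simp add: mtr_def scalar_prod_def atLeast0LessThan)
  finally show ?thesis .
qed

lemma mtr_sim:
  assumes "similar_mat_wit A B P Q" "A \<in> carrier_mat n n"
  shows "mtr A = mtr B"
proof -
  from similar_mat_witD2[OF assms(2) assms(1)]
  have *: "A = P * B * Q" "Q * P = 1\<^sub>m n" "P \<in> carrier_mat n n" "B \<in> carrier_mat n n" "Q \<in> carrier_mat n n"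
    by auto
  have "mtr A = mtr (P * (B * Q))" using * by (simp add: assoc_mult_mat[of P n n B n Q n])
  also have "\<dots> = mtr ((B * Q) * P)" using * by (intro mtr_comm) auto
  also have "\<dots> = mtr (B * (Q * P))" using * by (simp add: assoc_mult_mat[of B n n Q n P n])
  also have "\<dots> = mtr B" using * by simp
  finally show ?thesis .
qed

lemma ut_mult:
  assumes B: "B \<in> carrier_mat n n" and C: "C \<in> carrier_mat n n"
    and "upper_triangular B" "upper_triangular C"
  shows "upper_triangular (B * C) \<and> (\<forall>i<n. (B*C) $$ (i,i) = B $$ (i,i) * C $$ (i,i))"
proof
  show "upper_triangular (B * C)"
  proof
    fix i j assume ij: "j < i" "i < dim_row (B*C)"
    have "(B*C) $$ (i,j) = (\<Sum>k\<in>{0..<n}. B $$ (i,k) * C $$ (k,j))"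
      using ij B C by (simp add: scalar_prod_def)
    also have "\<dots> = 0"
    proof (rule sum.neutral, intro ballI)
      fix k assume k: "k \<in> {0..<n}"
      show "B $$ (i,k) * C $$ (k,j) = 0"
      proof (cases "k < i")
        case True then have "B $$ (i,k) = 0" using upper_triangularD[OF assms(3) True] ij B by auto
          then show ?thesis by simp
      next
        case False then have "C $$ (k,j) = 0" using upper_triangularD[OF assms(4)] ij C k by auto
          then show ?thesis by simp
      qed
    qed
    finally show "(B*C) $$ (i,j) = 0" .
  qed
  show "\<forall>i<n. (B*C) $$ (i,i) = B $$ (i,i) * C $$ (i,i)"
  proof (intro allI impI)
    fix i assume i: "i < n"
    have "(B*C) $$ (i,i) = (\<Sum>k\<in>{0..<n}. B $$ (i,k) * C $$ (k,i))"
      using i B C by (simp add: scalar_prod_def)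
    also have "\<dots> = B $$ (i,i) * C $$ (i,i)"
    proof -
      have "(\<Sum>k\<in>{0..<n}. B $$ (i,k) * C $$ (k,i)) = B $$ (i,i) * C $$ (i,i) + (\<Sum>k\<in>{0..<n}-{i}. B $$ (i,k) * C $$ (k,i))"
        using i by (subst sum.remove[of _ i]) auto
      also have "(\<Sum>k\<in>{0..<n}-{i}. B $$ (i,k) * C $$ (k,i)) = 0"
      proof (rule sum.neutral, intro ballI)
        fix k assume k: "k \<in> {0..<n}-{i}"
        show "B $$ (i,k) * C $$ (k,i) = 0"
        proof (cases "k < i")
          case True then have "B $$ (i,k) = 0" using upper_triangularD[OF assms(3) True] i B by auto
          then show ?thesis by simp
        next
          case False then have "i < k" using k by auto
          then have "C $$ (k,i) = 0" using upper_triangularD[OF assms(4)] k C by auto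
          then show ?thesis by simp
        qed
      qed
      finally show ?thesis by simp
    qed
    finally show "(B*C) $$ (i,i) = B $$ (i,i) * C $$ (i,i)" .
  qed
qed

lemma mtr_ut_diag:
  assumes "B \<in> carrier_mat n n"
  shows "mtr B = (\<Sum>i<n. B $$ (i,i))"
  using assms by (simp add: mtr_def)



lemma ut_pow':
  assumes B: "B \<in> carrier_mat n n" and ut: "upper_triangular B"
  shows "upper_triangular (B ^\<^sub>m k) \<and> (\<forall>i<n. (B ^\<^sub>m k) $$ (i,i) = B $$ (i,i) ^ k)"
proof (induction k)
  case 0
  have "upper_triangular (1\<^sub>m n :: real mat)" by (rule upper_triangularI) simp
  moreover have "B ^\<^sub>m 0 = 1\<^sub>m n" using B by simp
  ultimately show ?case by simp
next
  case (Suc k)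
  have c: "B ^\<^sub>m k \<in> carrier_mat n n" using B by simp
  from Suc.IH have ih1: "upper_triangular (B ^\<^sub>m k)" and ih2: "\<forall>i<n. (B ^\<^sub>m k) $$ (i,i) = B $$ (i,i) ^ k" by auto
  from ut_mult[OF c B ih1 ut] 
  have m: "upper_triangular (B ^\<^sub>m k * B)" "\<forall>i<n. (B ^\<^sub>m k * B) $$ (i,i) = (B ^\<^sub>m k) $$ (i,i) * B $$ (i,i)" by auto
  have e: "B ^\<^sub>m Suc k = B ^\<^sub>m k * B" by simp
  show ?case unfolding e
  proof
    show "upper_triangular (B ^\<^sub>m k * B)" by (rule m(1))
    show "\<forall>i<n. (B ^\<^sub>m k * B) $$ (i, i) = B $$ (i, i) ^ Suc k"
    proof (intro allI impI)
      fix i assume i: "i < n"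
      have "(B ^\<^sub>m k * B) $$ (i, i) = B $$ (i,i) ^ k * B $$ (i,i)" using m(2) ih2 i by simp
      also have "\<dots> = B $$ (i, i) ^ Suc k" by (rule power_Suc2[symmetric])
      finally show "(B ^\<^sub>m k * B) $$ (i, i) = B $$ (i, i) ^ Suc k" .
    qed
  qed
qed

lemma cs_sum':
  fixes a b :: "nat \<Rightarrow> real"
  shows "(\<Sum>i\<in>I. a i * b i)\<^sup>2 \<le> (\<Sum>i\<in>I. (a i)\<^sup>2) * (\<Sum>i\<in>I. (b i)\<^sup>2)"
proof -
  have 0: "0 \<le> (\<Sum>i\<in>I. \<Sum>j\<in>I. (a i * b j - a j * b i)\<^sup>2)"
    by (intro sum_nonneg) simp
  have e1: "\<And>i j. (a i * b j - a j * b i)\<^sup>2 = (a i)\<^sup>2 * (b j)\<^sup>2 + (b i)\<^sup>2 * (a j)\<^sup>2 - 2 * ((a i * b i) * (a j * b j))"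
    by (simp add: power2_eq_square algebra_simps)
  have e2: "(\<Sum>i\<in>I. \<Sum>j\<in>I. (a i * b j - a j * b i)\<^sup>2)
     = (\<Sum>i\<in>I. \<Sum>j\<in>I. (a i)\<^sup>2 * (b j)\<^sup>2) + (\<Sum>i\<in>I. \<Sum>j\<in>I. (b i)\<^sup>2 * (a j)\<^sup>2) - 2 * (\<Sum>i\<in>I. \<Sum>j\<in>I. (a i * b i) * (a j * b j))"
    unfolding e1 by (simp add: sum_subtractf sum.distrib sum_distrib_left)
  have e3: "(\<Sum>i\<in>I. \<Sum>j\<in>I. (a i)\<^sup>2 * (b j)\<^sup>2) = (\<Sum>i\<in>I. (a i)\<^sup>2) * (\<Sum>i\<in>I. (b i)\<^sup>2)"
    by (rule sum_product[symmetric])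
  have e4: "(\<Sum>i\<in>I. \<Sum>j\<in>I. (b i)\<^sup>2 * (a j)\<^sup>2) = (\<Sum>i\<in>I. (b i)\<^sup>2) * (\<Sum>i\<in>I. (a i)\<^sup>2)"
    by (rule sum_product[symmetric])
  have e5: "(\<Sum>i\<in>I. \<Sum>j\<in>I. (a i * b i) * (a j * b j)) = (\<Sum>i\<in>I. a i * b i) * (\<Sum>i\<in>I. a i * b i)"
    by (rule sum_product[symmetric])
  show ?thesis using 0 unfolding e2 e3 e4 e5 by (simp add: power2_eq_square algebra_simps)
qed

lemma pow_add_mat:
  assumes M: "(M :: real mat) \<in> carrier_mat n n"
  shows "M ^\<^sub>m (a + b) = M ^\<^sub>m a * M ^\<^sub>m b"
proof (induction b)
  case 0
  have "M ^\<^sub>m a \<in> carrier_mat n n" using M by simp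
  then show ?case using M by simp
next
  case (Suc b)
  have "M ^\<^sub>m (a + Suc b) = M ^\<^sub>m (a + b) * M" by simp
  also have "\<dots> = (M ^\<^sub>m a * M ^\<^sub>m b) * M" using Suc by simp
  also have "\<dots> = M ^\<^sub>m a * (M ^\<^sub>m b * M)"
    using M by (intro assoc_mult_mat[of _ n n _ n _ n]) auto
  finally show ?case by simp
qed

lemma pow_one_mat:
  assumes M: "(M :: real mat) \<in> carrier_mat n n"
  shows "M ^\<^sub>m 1 = M"
  using M by simp

lemma pow_sym:
  assumes M: "(M :: real mat) \<in> carrier_mat n n" and S: "transpose_mat M = M"
  shows "transpose_mat (M ^\<^sub>m k) = M ^\<^sub>m k"
proof (induction k)
  case 0
  then show ?case using M by simp
next
  case (Suc k)
  have c: "M ^\<^sub>m k \<in> carrier_mat n n" using M by simp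
  have "transpose_mat (M ^\<^sub>m Suc k) = transpose_mat (M ^\<^sub>m k * M)" by simp
  also have "\<dots> = transpose_mat M * transpose_mat (M ^\<^sub>m k)"
    by (rule transpose_mult[OF c M])
  also have "\<dots> = M ^\<^sub>m 1 * M ^\<^sub>m k" using Suc S pow_one_mat[OF M] by simp
  also have "\<dots> = M ^\<^sub>m (1 + k)" by (rule pow_add_mat[OF M, symmetric])
  also have "\<dots> = M ^\<^sub>m (k + 1)" by (simp add: add.commute)
  also have "\<dots> = M ^\<^sub>m k * M ^\<^sub>m 1" by (rule pow_add_mat[OF M])
  also have "\<dots> = M ^\<^sub>m Suc k" using pow_one_mat[OF M] by simp
  finally show ?case .
qed

lemma sym_entry:
  assumes M: "(M :: real mat) \<in> carrier_mat n n" and S: "transpose_mat M = M"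
    and "i < n" "j < n"
  shows "M $$ (i,j) = M $$ (j,i)"
proof -
  have "M $$ (i,j) = transpose_mat M $$ (i,j)" by (subst S) (rule refl)
  also have "\<dots> = M $$ (j,i)" using assms(1,3,4) by simp
  finally show ?thesis .
qed

definition qf :: "nat \<Rightarrow> real mat \<Rightarrow> (nat \<Rightarrow> real) \<Rightarrow> real" where
  "qf n M x = (\<Sum>i<n. \<Sum>j<n. x i * M $$ (i,j) * x j)"

definition nn :: "nat \<Rightarrow> (nat \<Rightarrow> real) \<Rightarrow> real" where
  "nn n x = (\<Sum>i<n. (x i)\<^sup>2)"

lemma mult_entry:
  assumes "(K :: real mat) \<in> carrier_mat n n" "L \<in> carrier_mat n n" "i < n" "j < n"
  shows "(K * L) $$ (i,j) = (\<Sum>l<n. K $$ (i,l) * L $$ (l,j))"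
  using assms by (simp add: scalar_prod_def atLeast0LessThan)

lemma qf_lin:
  "qf n K x = (\<Sum>i<n. x i * (\<Sum>j<n. K $$ (i,j) * x j))"
  unfolding qf_def by (simp add: sum_distrib_left mult.assoc)

lemma qf_KK:
  assumes K: "(K :: real mat) \<in> carrier_mat n n" and S: "transpose_mat K = K"
  shows "qf n (K * K) x = (\<Sum>l<n. (\<Sum>j<n. K $$ (l,j) * x j)\<^sup>2)"
proof -
  have "qf n (K * K) x = (\<Sum>i<n. \<Sum>j<n. x i * (\<Sum>l<n. K $$ (i,l) * K $$ (l,j)) * x j)"
    unfolding qf_def by (intro sum.cong refl) (simp add: mult_entry[OF K K])
  also have "\<dots> = (\<Sum>i<n. \<Sum>j<n. \<Sum>l<n. (K $$ (l,i) * x i) * (K $$ (l,j) * x j))"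
  proof (intro sum.cong refl)
    fix i j assume i: "i \<in> {..<n}" and j: "j \<in> {..<n}"
    have "x i * (\<Sum>l<n. K $$ (i,l) * K $$ (l,j)) * x j = (\<Sum>l<n. x i * (K $$ (i,l) * K $$ (l,j)) * x j)"
      by (simp add: sum_distrib_left sum_distrib_right)
    also have "\<dots> = (\<Sum>l<n. (K $$ (l,i) * x i) * (K $$ (l,j) * x j))"
    proof (intro sum.cong refl)
      fix l assume l: "l \<in> {..<n}"
      have "K $$ (i,l) = K $$ (l,i)" using sym_entry[OF K S] i l by simp
      then show "x i * (K $$ (i,l) * K $$ (l,j)) * x j = (K $$ (l,i) * x i) * (K $$ (l,j) * x j)"
        by simp
    qed
    finally show "x i * (\<Sum>l<n. K $$ (i,l) * K $$ (l,j)) * x j = (\<Sum>l<n. (K $$ (l,i) * x i) * (K $$ (l,j) * x j))" .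
  qed
  also have "\<dots> = (\<Sum>i<n. \<Sum>l<n. \<Sum>j<n. (K $$ (l,i) * x i) * (K $$ (l,j) * x j))"
    by (rule sum.cong[OF refl], rule sum.swap)
  also have "\<dots> = (\<Sum>l<n. \<Sum>i<n. \<Sum>j<n. (K $$ (l,i) * x i) * (K $$ (l,j) * x j))"
    by (rule sum.swap)
  also have "\<dots> = (\<Sum>l<n. (\<Sum>j<n. K $$ (l,j) * x j) * (\<Sum>j<n. K $$ (l,j) * x j))"
    by (intro sum.cong refl) (rule sum_product[symmetric])
  also have "\<dots> = (\<Sum>l<n. (\<Sum>j<n. K $$ (l,j) * x j)\<^sup>2)"
    by (simp add: power2_eq_square)
  finally show ?thesis .
qed

lemma KK_bound:
  assumes K: "(K :: real mat) \<in> carrier_mat n n" and S: "transpose_mat K = K"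
  shows "(\<Sum>l<n. (\<Sum>j<n. K $$ (l,j) * x j)\<^sup>2) \<le> nn n x * mtr (K * K)"
proof -
  have "(\<Sum>l<n. (\<Sum>j<n. K $$ (l,j) * x j)\<^sup>2) \<le> (\<Sum>l<n. (\<Sum>j<n. (K $$ (l,j))\<^sup>2) * nn n x)"
    unfolding nn_def by (intro sum_mono cs_sum')
  also have "\<dots> = nn n x * (\<Sum>l<n. \<Sum>j<n. (K $$ (l,j))\<^sup>2)"
    by (simp add: sum_distrib_left sum_distrib_right mult.commute)
  also have "(\<Sum>l<n. \<Sum>j<n. (K $$ (l,j))\<^sup>2) = mtr (K * K)"
  proof -
    have "mtr (K * K) = (\<Sum>l<n. (K * K) $$ (l,l))" using K by (simp add: mtr_def)
    also have "\<dots> = (\<Sum>l<n. \<Sum>j<n. K $$ (l,j) * K $$ (j,l))"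
      by (intro sum.cong refl) (simp add: mult_entry[OF K K])
    also have "\<dots> = (\<Sum>l<n. \<Sum>j<n. (K $$ (l,j))\<^sup>2)"
    proof (intro sum.cong refl)
      fix l j assume "l \<in> {..<n}" "j \<in> {..<n}"
      then have "K $$ (j,l) = K $$ (l,j)" using sym_entry[OF K S] by simp
      then show "K $$ (l,j) * K $$ (j,l) = (K $$ (l,j))\<^sup>2" by (simp add: power2_eq_square)
    qed
    finally show ?thesis by simp
  qed
  finally show ?thesis by simp
qed

lemma ray_pow:
  assumes M: "(M :: real mat) \<in> carrier_mat n n" and S: "transpose_mat M = M"
    and q: "qf n M x = s * nn n x" and s: "s \<ge> 0" and p: "nn n x > 0"
  shows "s ^ (2 ^ j) * nn n x \<le> qf n (M ^\<^sub>m (2 ^ j)) x"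
proof (induction j)
  case 0
  then show ?case using q pow_one_mat[OF M] by simp
next
  case (Suc j)
  define K where "K = M ^\<^sub>m (2 ^ j)"
  have K: "K \<in> carrier_mat n n" using M by (simp add: K_def)
  have KS: "transpose_mat K = K" unfolding K_def by (rule pow_sym[OF M S])
  have KK: "M ^\<^sub>m (2 ^ Suc j) = K * K"
    unfolding K_def using pow_add_mat[OF M, of "2^j" "2^j"] by (simp add: mult_2)
  define y where "y = (\<lambda>l. \<Sum>j<n. K $$ (l,j) * x j)"
  have a: "qf n K x = (\<Sum>i<n. x i * y i)" unfolding qf_lin y_def ..
  have b: "qf n (K * K) x = (\<Sum>l<n. (y l)\<^sup>2)" unfolding y_def by (rule qf_KK[OF K KS])
  have cs: "(qf n K x)\<^sup>2 \<le> nn n x * qf n (K * K) x"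
    unfolding a b nn_def by (rule cs_sum')
  have ih: "s ^ (2 ^ j) * nn n x \<le> qf n K x" using Suc.IH unfolding K_def .
  have nn0: "0 \<le> s ^ (2 ^ j) * nn n x" using s p by simp
  have "(s ^ (2 ^ j) * nn n x)\<^sup>2 \<le> (qf n K x)\<^sup>2"
    using ih nn0 by (rule power_mono)
  also have "\<dots> \<le> nn n x * qf n (K * K) x" by (rule cs)
  finally have "nn n x * (s ^ (2 ^ Suc j) * nn n x) \<le> nn n x * qf n (K * K) x"
    by (simp add: power2_eq_square power_mult[symmetric] mult_2 power_add algebra_simps)
  then have "s ^ (2 ^ Suc j) * nn n x \<le> qf n (K * K) x"
    using p by simp
  then show ?case unfolding KK .
qed

lemma trace_pow_bound:
  assumes M: "(M :: real mat) \<in> carrier_mat n n" and S: "transpose_mat M = M"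
    and q: "qf n M x = s * nn n x" and s: "s \<ge> 0" and p: "nn n x > 0"
  shows "s ^ (2 ^ Suc j) \<le> mtr (M ^\<^sub>m (2 ^ Suc j))"
proof -
  define K where "K = M ^\<^sub>m (2 ^ j)"
  have K: "K \<in> carrier_mat n n" using M by (simp add: K_def)
  have KS: "transpose_mat K = K" unfolding K_def by (rule pow_sym[OF M S])
  have KK: "M ^\<^sub>m (2 ^ Suc j) = K * K"
    unfolding K_def using pow_add_mat[OF M, of "2^j" "2^j"] by (simp add: mult_2)
  have "s ^ (2 ^ Suc j) * nn n x \<le> qf n (K * K) x"
    using ray_pow[OF M S q s p, of "Suc j"] unfolding KK .
  also have "\<dots> \<le> nn n x * mtr (K * K)"
    unfolding qf_KK[OF K KS] by (rule KK_bound[OF K KS])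
  finally have "s ^ (2 ^ Suc j) * nn n x \<le> mtr (K * K) * nn n x" by (simp add: mult.commute)
  then show ?thesis using p unfolding KK by simp
qed



lemma adj_carrier: "adj_matrix n E \<in> carrier_mat n n"
  by (simp add: adj_matrix_def)

lemma adj_entry: "i < n \<Longrightarrow> j < n \<Longrightarrow> adj_matrix n E $$ (i,j) = (if E i j then 1 else 0)"
  by (simp add: adj_matrix_def)

lemma adj_sym: assumes G: "simple_graph n E"
  shows "transpose_mat (adj_matrix n E) = adj_matrix n E"
proof (rule eq_matI)
  fix i j assume i: "i < dim_row (adj_matrix n E)" and j: "j < dim_col (adj_matrix n E)"
  have ij: "i < n" "j < n" using i j by (auto simp: adj_matrix_def)
  have "E j i = E i j" using G unfolding simple_graph_def by blast
  then show "transpose_mat (adj_matrix n E) $$ (i, j) = adj_matrix n E $$ (i, j)"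
    using ij by (simp add: adj_matrix_def)
qed (auto simp: adj_matrix_def)

lemma adj_diag: assumes G: "simple_graph n E" and i: "i < n"
  shows "adj_matrix n E $$ (i,i) = 0"
proof -
  have "\<not> E i i" using G unfolding simple_graph_def by blast
  then show ?thesis using i by (simp add: adj_matrix_def)
qed

lemma deg_sum: "real (degree n E i) = (\<Sum>j<n. if E i j then 1 else 0)"
proof -
  have e: "{j. j < n \<and> E i j} = {j \<in> {..<n}. E i j}" by auto
  have "real (degree n E i) = real (card {j \<in> {..<n}. E i j})" by (simp only: degree_def e)
  also have "\<dots> = (\<Sum>j\<in>{j \<in> {..<n}. E i j}. (1::real))" by simp
  also have "\<dots> = (\<Sum>j<n. if E i j then 1 else 0)" by (rule sum.inter_filter) simp
  finally show ?thesis .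
qed

lemma edges_finite: "finite (edges n E)"
proof -
  have "edges n E \<subseteq> {..<n} \<times> {..<n}" by (auto simp: edges_def)
  then show ?thesis by (rule finite_subset) simp
qed



lemma S_eq:
  assumes G: "simple_graph n E"
  shows "{p \<in> {..<n} \<times> {..<n}. E (fst p) (snd p)} = edges n E \<union> prod.swap ` edges n E"
proof
  have sg: "\<And>i j. E i j \<Longrightarrow> i < n \<and> j < n \<and> i \<noteq> j \<and> E j i" using G unfolding simple_graph_def by blast
  show "{p \<in> {..<n} \<times> {..<n}. E (fst p) (snd p)} \<subseteq> edges n E \<union> prod.swap ` edges n E"
  proof
    fix p assume p: "p \<in> {p \<in> {..<n} \<times> {..<n}. E (fst p) (snd p)}"
    obtain i j where pij: "p = (i,j)" by (cases p)
    have ij: "i < n" "j < n" "E i j" using p pij by auto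
    have ne: "i \<noteq> j" and eji: "E j i" using sg[OF ij(3)] by auto
    show "p \<in> edges n E \<union> prod.swap ` edges n E"
    proof (cases "i < j")
      case True
      then have "p \<in> edges n E" using ij pij by (simp add: edges_def)
      then show ?thesis by (rule UnI1)
    next
      case False then have "j < i" using ne by simp
      then have "(j,i) \<in> edges n E" using ij eji by (simp add: edges_def)
      then have "prod.swap (j,i) \<in> prod.swap ` edges n E" by (rule imageI)
      then have "p \<in> prod.swap ` edges n E" using pij by simp
      then show ?thesis by (rule UnI2)
    qed
  qed
  show "edges n E \<union> prod.swap ` edges n E \<subseteq> {p \<in> {..<n} \<times> {..<n}. E (fst p) (snd p)}"
  proof
    fix p assume p: "p \<in> edges n E \<union> prod.swap ` edges n E"
    then show "p \<in> {p \<in> {..<n} \<times> {..<n}. E (fst p) (snd p)}"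
    proof
      assume "p \<in> edges n E" then show ?thesis by (auto simp: edges_def)
    next
      assume "p \<in> prod.swap ` edges n E"
      then obtain i j where ij: "(i,j) \<in> edges n E" "p = (j,i)" by auto
      then have "i < n" "j < n" "E i j" by (auto simp: edges_def)
      then have "E j i" using sg by blast
      then show ?thesis using ij \<open>i < n\<close> \<open>j < n\<close> by simp
    qed
  qed
qed

lemma disj_edges: "edges n E \<inter> prod.swap ` edges n E = {}"
proof -
  have "\<And>p. p \<in> edges n E \<Longrightarrow> p \<in> prod.swap ` edges n E \<Longrightarrow> False"
  proof -
    fix p assume a: "p \<in> edges n E" "p \<in> prod.swap ` edges n E"
    then obtain i j where ij: "(i,j) \<in> edges n E" "p = (j,i)" by auto
    then have "i < j" by (simp add: edges_def)
    moreover have "j < i" using a(1) ij(2) by (simp add: edges_def)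
    ultimately show False by simp
  qed
  then show ?thesis by blast
qed

lemma sum_edges:
  assumes G: "simple_graph n E" and f: "\<And>i j. f i j = f j i"
  shows "(\<Sum>i<n. \<Sum>j<n. if E i j then f i j else (0::real)) = 2 * (\<Sum>p\<in>edges n E. f (fst p) (snd p))"
proof -
  let ?S = "{p \<in> {..<n} \<times> {..<n}. E (fst p) (snd p)}"
  let ?g = "\<lambda>p. f (fst p) (snd p)"
  have fin: "finite (edges n E)" by (rule edges_finite)
  have "(\<Sum>i<n. \<Sum>j<n. if E i j then f i j else (0::real)) = (\<Sum>p\<in>{..<n} \<times> {..<n}. if E (fst p) (snd p) then ?g p else 0)"
    by (subst sum.cartesian_product) (simp add: split_def)
  also have "\<dots> = (\<Sum>p\<in>?S. ?g p)" by (rule sum.inter_filter[symmetric]) simp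
  also have "\<dots> = (\<Sum>p\<in>edges n E \<union> prod.swap ` edges n E. ?g p)" by (simp only: S_eq[OF G])
  also have "\<dots> = (\<Sum>p\<in>edges n E. ?g p) + (\<Sum>p\<in>prod.swap ` edges n E. ?g p)"
    by (rule sum.union_disjoint[OF fin finite_imageI[OF fin] disj_edges])
  also have "(\<Sum>p\<in>prod.swap ` edges n E. ?g p) = (\<Sum>p\<in>edges n E. ?g (prod.swap p))"
    by (rule sum.reindex_cong[of prod.swap]) (auto simp: inj_on_def)
  also have "(\<Sum>p\<in>edges n E. ?g (prod.swap p)) = (\<Sum>p\<in>edges n E. ?g p)"
  proof (intro sum.cong refl)
    fix p show "?g (prod.swap p) = ?g p" by (cases p) (simp add: f)
  qed
  finally show ?thesis by simp
qed



lemma herm_real: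
  fixes A :: "real mat"
  assumes A: "A \<in> carrier_mat n n" and S: "transpose_mat A = A"
    and ev: "eigenvector (map_mat complex_of_real A) v a"
  shows "Im a = 0"
proof -
  let ?M = "map_mat complex_of_real A"
  have M: "?M \<in> carrier_mat n n" using A by simp
  from ev have v: "v \<in> carrier_vec n" "v \<noteq> 0\<^sub>v n" "?M *\<^sub>v v = a \<cdot>\<^sub>v v" using A
    by (auto simp: eigenvector_def)
  have sym: "\<And>i j. i < n \<Longrightarrow> j < n \<Longrightarrow> A $$ (i,j) = A $$ (j,i)"
  proof -
    fix i j assume ij: "i < n" "j < n"
    have "A $$ (i,j) = transpose_mat A $$ (i,j)" by (subst S) (rule refl)
    also have "\<dots> = A $$ (j,i)" using ij A by simp
    finally show "A $$ (i,j) = A $$ (j,i)" .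
  qed
  have comp: "\<And>i. i < n \<Longrightarrow> (\<Sum>j<n. complex_of_real (A $$ (i,j)) * v $ j) = a * v $ i"
  proof -
    fix i assume i: "i < n"
    have "(?M *\<^sub>v v) $ i = (a \<cdot>\<^sub>v v) $ i" using v(3) by simp
    then show "(\<Sum>j<n. complex_of_real (A $$ (i,j)) * v $ j) = a * v $ i"
      using i A v(1) by (simp add: scalar_prod_def atLeast0LessThan)
  qed
  define S where "S = (\<Sum>i<n. cnj (v $ i) * (\<Sum>j<n. complex_of_real (A $$ (i,j)) * v $ j))"
  define k where "k = (\<Sum>i<n. (cmod (v $ i))\<^sup>2)"
  have SK: "S = a * complex_of_real k"
  proof -
    have "S = (\<Sum>i<n. cnj (v $ i) * (a * v $ i))"
      unfolding S_def by (intro sum.cong refl) (simp add: comp)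
    also have "\<dots> = (\<Sum>i<n. a * complex_of_real ((cmod (v $ i))\<^sup>2))"
    proof (intro sum.cong refl)
      fix i
      show "cnj (v $ i) * (a * v $ i) = a * complex_of_real ((cmod (v $ i))\<^sup>2)"
        by (simp only: complex_norm_square) (simp add: algebra_simps)
    qed
    also have "\<dots> = a * (\<Sum>i<n. complex_of_real ((cmod (v $ i))\<^sup>2))"
      by (simp only: sum_distrib_left)
    also have "\<dots> = a * complex_of_real k" by (simp add: k_def)
    finally show ?thesis .
  qed
  have cS: "cnj S = S"
  proof -
    have "cnj S = (\<Sum>i<n. \<Sum>j<n. v $ i * complex_of_real (A $$ (i,j)) * cnj (v $ j))"
      unfolding S_def by (simp add: sum_distrib_left mult.assoc)
    also have "\<dots> = (\<Sum>j<n. \<Sum>i<n. v $ i * complex_of_real (A $$ (i,j)) * cnj (v $ j))"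
      by (rule sum.swap)
    also have "\<dots> = (\<Sum>j<n. \<Sum>i<n. cnj (v $ j) * (complex_of_real (A $$ (j,i)) * v $ i))"
    proof (intro sum.cong refl)
      fix i j assume "i \<in> {..<n}" "j \<in> {..<n}"
      then have "A $$ (i,j) = A $$ (j,i)" using sym by simp
      then show "v $ i * complex_of_real (A $$ (i,j)) * cnj (v $ j) = cnj (v $ j) * (complex_of_real (A $$ (j,i)) * v $ i)"
        by simp
    qed
    also have "\<dots> = S" unfolding S_def by (simp add: sum_distrib_left)
    finally show ?thesis .
  qed
  have "\<exists>i<n. v $ i \<noteq> 0"
  proof (rule ccontr)
    assume "\<not> (\<exists>i<n. v $ i \<noteq> 0)"
    then have "v = 0\<^sub>v n" using v(1) by (intro eq_vecI) auto
    with v(2) show False by simp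
  qed
  then obtain i where i: "i < n" "v $ i \<noteq> 0" by blast
  have kpos: "k > 0"
    unfolding k_def by (rule sum_pos2[of _ i]) (use i in auto)
  have "Im (cnj S) = Im S" using cS by simp
  then have "Im S = 0" by simp
  then have "Im a * k = 0" using SK by simp
  then show "Im a = 0" using kpos by simp
qed

lemma sym_factor:
  assumes A: "(A :: real mat) \<in> carrier_mat n n" and S: "transpose_mat A = A"
  shows "\<exists>es. length es = n \<and> char_poly A = (\<Prod>a\<leftarrow>es. [:-a,1:])"
proof -
  interpret R: map_poly_comm_ring_hom "complex_of_real" ..
  let ?M = "map_mat complex_of_real A"
  have M: "?M \<in> carrier_mat n n" using A by simp
  obtain as where as: "char_poly ?M = (\<Prod>a\<leftarrow>as. [:-a,1:])" "length as = n"
    using char_poly_factorized[OF M] by blast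
  have real: "\<And>a. a \<in> set as \<Longrightarrow> complex_of_real (Re a) = a"
  proof -
    fix a assume a: "a \<in> set as"
    have "poly (char_poly ?M) a = 0" unfolding as(1) using a
      by (simp add: poly_prod_list prod_list_zero_iff)
    then have "eigenvalue ?M a" using eigenvalue_root_char_poly[OF M] by simp
    then obtain v where "eigenvector ?M v a" by (auto simp: eigenvalue_def)
    then have "Im a = 0" by (rule herm_real[OF A S])
    then show "complex_of_real (Re a) = a" by (simp add: complex_eq_iff)
  qed
  define es where "es = map Re as"
  have pm: "\<And>bs. map_poly complex_of_real (\<Prod>b\<leftarrow>bs. [:-b,1:]) = (\<Prod>b\<leftarrow>bs. [:- complex_of_real b,1:])"
  proof -
    fix bs :: "real list"
    show "map_poly complex_of_real (\<Prod>b\<leftarrow>bs. [:-b,1:]) = (\<Prod>b\<leftarrow>bs. [:- complex_of_real b,1:])"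
    proof -
      have "map_poly complex_of_real (\<Prod>b\<leftarrow>bs. [:-b,1:]) = prod_list (map (map_poly complex_of_real) (map (\<lambda>b. [:-b,1:]) bs))"
        by (rule R.hom_prod_list)
      also have "\<dots> = (\<Prod>b\<leftarrow>bs. [:- complex_of_real b,1:])"
        unfolding map_map by (rule arg_cong[where f=prod_list], rule map_cong) simp_all
      finally show ?thesis .
    qed
  qed
  have "map_poly complex_of_real (char_poly A) = char_poly ?M"
    by (rule of_real_hom.char_poly_hom[OF A, symmetric])
  also have "\<dots> = (\<Prod>a\<leftarrow>as. [:-a,1:])" by (rule as(1))
  also have "\<dots> = (\<Prod>a\<leftarrow>as. [:- complex_of_real (Re a),1:])"
    by (rule arg_cong[where f=prod_list], rule map_cong) (simp_all add: real)
  also have "\<dots> = (\<Prod>b\<leftarrow>es. [:- complex_of_real b,1:])"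
    by (simp add: es_def o_def)
  also have "\<dots> = map_poly complex_of_real (\<Prod>b\<leftarrow>es. [:-b,1:])"
    by (rule pm[symmetric])
  finally have eq: "map_poly complex_of_real (char_poly A) = map_poly complex_of_real (\<Prod>b\<leftarrow>es. [:-b,1:])" .
  have "char_poly A = (\<Prod>b\<leftarrow>es. [:-b,1:])"
  proof (rule poly_eqI)
    fix i
    have "coeff (map_poly complex_of_real (char_poly A)) i = coeff (map_poly complex_of_real (\<Prod>b\<leftarrow>es. [:-b,1:])) i"
      using eq by simp
    then show "coeff (char_poly A) i = coeff (\<Prod>b\<leftarrow>es. [:-b,1:]) i"
      by (simp add: coeff_map_poly)
  qed
  moreover have "length es = n" using as(2) by (simp add: es_def)
  ultimately show ?thesis by blast
qed

lemma proots_lin: "proots (\<Prod>b\<leftarrow>es. [:-b,1:]) = mset (es :: real list)"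
proof (induction es)
  case Nil then show ?case by simp
next
  case (Cons b es)
  have nz0: "\<And>b. [:-b,1:] \<noteq> (0 :: real poly)" by simp
  have "0 \<notin> set (map (\<lambda>b. [:-b,1:]) es :: real poly list)"
  proof
    assume "0 \<in> set (map (\<lambda>b. [:-b,1:]) es :: real poly list)"
    then obtain b where "0 = ([:-b,1:] :: real poly)" by auto
    with nz0[of b] show False by simp
  qed
  then have nz: "(\<Prod>b\<leftarrow>es. [:-b,1:]) \<noteq> (0 :: real poly)" by (simp add: prod_list_zero_iff)
  have nz2: "[:-b,1:] \<noteq> (0 :: real poly)" by simp
  have "proots (\<Prod>b\<leftarrow>b # es. [:-b,1:]) = proots ([:-b,1:] * (\<Prod>b\<leftarrow>es. [:-b,1:]))" by simp
  also have "\<dots> = proots [:-b,1:] + proots (\<Prod>b\<leftarrow>es. [:-b,1:])" by (rule proots_mult[OF nz2 nz])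
  also have "proots [:-b,1:] = {#b#}" using proots_linear_factor[of "-b"] by simp
  finally show ?case using Cons by simp
qed



lemma schur_data:
  assumes A: "(A :: real mat) \<in> carrier_mat n n" and cp: "char_poly A = (\<Prod>a\<leftarrow>es. [:-a,1:])"
    and len: "length es = n"
  obtains B P Q where "similar_mat_wit A B P Q" "upper_triangular B" "B \<in> carrier_mat n n"
    "\<And>i. i < n \<Longrightarrow> B $$ (i,i) = es ! i"
proof -
  obtain B P Q where sd: "schur_decomposition A es = (B,P,Q)" by (cases "schur_decomposition A es") auto
  from schur_decomposition[OF A cp sd]
  have sim: "similar_mat_wit A B P Q" and ut: "upper_triangular B" and dg: "diag_mat B = es" by auto
  have Bc: "B \<in> carrier_mat n n" using similar_mat_witD2[OF A sim] by auto
  have "\<And>i. i < n \<Longrightarrow> B $$ (i,i) = es ! i"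
  proof -
    fix i assume i: "i < n"
    have "es ! i = diag_mat B ! i" using dg by simp
    also have "\<dots> = B $$ (i,i)" using i Bc by (simp add: diag_mat_def)
    finally show "B $$ (i,i) = es ! i" by simp
  qed
  then show ?thesis using that sim ut Bc by blast
qed

lemma eig_trace:
  assumes A: "(A :: real mat) \<in> carrier_mat n n" and cp: "char_poly A = (\<Prod>a\<leftarrow>es. [:-a,1:])"
    and len: "length es = n"
  shows "(\<Sum>i<n. es ! i) = mtr A"
proof -
  obtain B P Q where sim: "similar_mat_wit A B P Q" and ut: "upper_triangular B" and Bc: "B \<in> carrier_mat n n"
    and dg: "\<And>i. i < n \<Longrightarrow> B $$ (i,i) = es ! i"
    using schur_data[OF A cp len] by blast
  have "mtr A = mtr B" by (rule mtr_sim[OF sim A])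
  also have "\<dots> = (\<Sum>i<n. B $$ (i,i))" using Bc by (simp add: mtr_def)
  also have "\<dots> = (\<Sum>i<n. es ! i)" by (intro sum.cong refl) (simp add: dg)
  finally show ?thesis by simp
qed

lemma shift_sim:
  assumes sim: "similar_mat_wit A B P Q" and A: "(A :: real mat) \<in> carrier_mat n n"
  shows "similar_mat_wit (A + c \<cdot>\<^sub>m 1\<^sub>m n) (B + c \<cdot>\<^sub>m 1\<^sub>m n) P Q"
proof -
  note d = similar_mat_witD2[OF A sim]
  have I: "c \<cdot>\<^sub>m 1\<^sub>m n \<in> carrier_mat n n" by simp
  have "P * (B + c \<cdot>\<^sub>m 1\<^sub>m n) = P * B + P * (c \<cdot>\<^sub>m 1\<^sub>m n)"
    by (rule mult_add_distrib_mat[OF d(6) d(5) I])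
  also have "P * (c \<cdot>\<^sub>m 1\<^sub>m n) = c \<cdot>\<^sub>m P"
    using mult_smult_distrib[OF d(6), of "1\<^sub>m n" n c] d(6) by simp
  finally have e1: "P * (B + c \<cdot>\<^sub>m 1\<^sub>m n) = P * B + c \<cdot>\<^sub>m P" .
  have PB: "P * B \<in> carrier_mat n n" using d by simp
  have cP: "c \<cdot>\<^sub>m P \<in> carrier_mat n n" using d by simp
  have "P * (B + c \<cdot>\<^sub>m 1\<^sub>m n) * Q = (P * B + c \<cdot>\<^sub>m P) * Q" by (simp add: e1)
  also have "\<dots> = P * B * Q + (c \<cdot>\<^sub>m P) * Q"
    by (rule add_mult_distrib_mat[OF PB cP d(7)])
  also have "(c \<cdot>\<^sub>m P) * Q = c \<cdot>\<^sub>m (P * Q)"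
    by (rule mult_smult_assoc_mat[OF d(6) d(7)])
  also have "P * B * Q = A" using d(3) by simp
  also have "P * Q = 1\<^sub>m n" using d(1) .
  finally have e: "A + c \<cdot>\<^sub>m 1\<^sub>m n = P * (B + c \<cdot>\<^sub>m 1\<^sub>m n) * Q" by simp
  show ?thesis
    unfolding similar_mat_wit_def Let_def using d e by auto
qed

lemma exp_strict:
  fixes x :: real assumes "x \<noteq> 0" shows "1 + x < exp x"
proof (cases "1 + x / 2 \<ge> 0")
  case True
  have "1 + x / 2 \<le> exp (x / 2)" by (rule exp_ge_add_one_self)
  then have "(1 + x / 2)\<^sup>2 \<le> (exp (x / 2))\<^sup>2" using True by (rule power_mono)
  also have "(exp (x / 2))\<^sup>2 = exp x" by (simp add: power2_eq_square flip: exp_add)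
  finally have "(1 + x / 2)\<^sup>2 \<le> exp x" .
  moreover have "(1 + x / 2)\<^sup>2 = 1 + x + x\<^sup>2 / 4" by (simp add: power2_eq_square field_simps)
  moreover have "x\<^sup>2 > 0" using assms by simp
  ultimately show ?thesis by linarith
next
  case False
  then have "1 + x < 0" by linarith
  also have "0 < exp x" by simp
  finally show ?thesis .
qed

lemma eig_max:
  assumes A: "(A :: real mat) \<in> carrier_mat n n" and S: "transpose_mat A = A"
    and cp: "char_poly A = (\<Prod>a\<leftarrow>es. [:-a,1:])" and len: "length es = n" and n: "n > 0"
    and q: "qf n A x = r * nn n x" and p: "nn n x > 0" and r: "r \<ge> 0"
  shows "\<exists>k<n. es ! k \<ge> r"
proof -
  obtain B P Q where sim: "similar_mat_wit A B P Q" and ut: "upper_triangular B" and Bc: "B \<in> carrier_mat n n"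
    and dg: "\<And>i. i < n \<Longrightarrow> B $$ (i,i) = es ! i"
    using schur_data[OF A cp len] by blast
  define c where "c = (\<Sum>i<n. \<bar>es ! i\<bar>)"
  have c: "\<And>i. i < n \<Longrightarrow> 0 \<le> es ! i + c"
  proof -
    fix i assume i: "i < n"
    have "\<bar>es ! i\<bar> \<le> c" unfolding c_def by (rule member_le_sum) (use i in auto)
    then show "0 \<le> es ! i + c" by linarith
  qed
  have c0: "c \<ge> 0" unfolding c_def by (intro sum_nonneg) auto
  define M where "M = A + c \<cdot>\<^sub>m 1\<^sub>m n"
  define BB where "BB = B + c \<cdot>\<^sub>m 1\<^sub>m n"
  have Mc: "M \<in> carrier_mat n n" using A by (simp add: M_def)
  have BBc: "BB \<in> carrier_mat n n" using Bc by (simp add: BB_def)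
  have simM: "similar_mat_wit M BB P Q" unfolding M_def BB_def by (rule shift_sim[OF sim A])
  have utBB: "upper_triangular BB"
  proof (rule upper_triangularI)
    fix i j assume "j < i" "i < dim_row BB"
    then show "BB $$ (i,j) = 0" using ut Bc by (auto simp: BB_def)
  qed
  have dBB: "\<And>i. i < n \<Longrightarrow> BB $$ (i,i) = es ! i + c" using Bc dg by (simp add: BB_def)
  have MS: "transpose_mat M = M"
  proof (rule eq_matI)
    fix i j assume "i < dim_row M" "j < dim_col M"
    then have ij: "i < n" "j < n" using Mc by auto
    have "A $$ (j,i) = A $$ (i,j)" using sym_entry[OF A S ij(2) ij(1)] .
    then show "transpose_mat M $$ (i,j) = M $$ (i,j)" using ij A by (auto simp: M_def)
  qed (use Mc in auto)
  have qM: "qf n M x = (r + c) * nn n x"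
  proof -
    have "qf n M x = (\<Sum>i<n. \<Sum>j<n. x i * A $$ (i,j) * x j + (if j = i then c * (x i * x i) else 0))"
      unfolding qf_def
    proof (intro sum.cong refl)
      fix i j assume "i \<in> {..<n}" "j \<in> {..<n}"
      then show "x i * M $$ (i,j) * x j = x i * A $$ (i,j) * x j + (if j = i then c * (x i * x i) else 0)"
        using A by (auto simp: M_def algebra_simps)
    qed
    also have "\<dots> = qf n A x + (\<Sum>i<n. c * (x i * x i))"
      unfolding qf_def by (simp add: sum.distrib)
    also have "(\<Sum>i<n. c * (x i * x i)) = c * nn n x"
      unfolding nn_def by (simp add: sum_distrib_left power2_eq_square)
    finally show ?thesis using q by (simp add: algebra_simps)
  qed
  have s0: "r + c \<ge> 0" using r c0 by simp
  define \<nu> where "\<nu> = Max ((\<lambda>i. es ! i + c) ` {..<n})"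
  have nu_ge: "\<And>i. i < n \<Longrightarrow> es ! i + c \<le> \<nu>" unfolding \<nu>_def by (intro Max_ge) auto
  have nu_in: "\<nu> \<in> (\<lambda>i. es ! i + c) ` {..<n}" unfolding \<nu>_def by (rule Max_in) (use n in auto)
  then obtain k where k: "k < n" "\<nu> = es ! k + c" by auto
  have nu0: "\<nu> \<ge> 0" using c[OF k(1)] k by simp
  have bound: "\<And>j. (r + c) ^ (2 ^ Suc j) \<le> real n * \<nu> ^ (2 ^ Suc j)"
  proof -
    fix j
    let ?N = "2 ^ Suc j :: nat"
    have "(r + c) ^ ?N \<le> mtr (M ^\<^sub>m ?N)" by (rule trace_pow_bound[OF Mc MS qM s0 p])
    also have "\<dots> = mtr (BB ^\<^sub>m ?N)" by (rule mtr_sim[OF similar_mat_wit_pow[OF simM] pow_carrier_mat[OF Mc]])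
    also have "\<dots> = (\<Sum>i<n. (BB ^\<^sub>m ?N) $$ (i,i))" using BBc by (simp add: mtr_def)
    also have "\<dots> = (\<Sum>i<n. (es ! i + c) ^ ?N)"
      by (intro sum.cong refl) (use ut_pow'[OF BBc utBB, of ?N] dBB in simp)
    also have "\<dots> \<le> (\<Sum>i<n. \<nu> ^ ?N)"
      by (intro sum_mono power_mono) (use nu_ge c in auto)
    also have "\<dots> = real n * \<nu> ^ ?N" by simp
    finally show "(r + c) ^ ?N \<le> real n * \<nu> ^ ?N" .
  qed
  have "r + c \<le> \<nu>"
  proof (rule ccontr)
    assume "\<not> r + c \<le> \<nu>"
    then have lt: "\<nu> < r + c" by simp
    then have spos: "r + c > 0" using nu0 by simp
    define qq where "qq = \<nu> / (r + c)"
    have q0: "0 \<le> qq" using nu0 spos by (simp add: qq_def)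
    have q1: "qq < 1" using lt spos by (simp add: qq_def)
    have all: "\<And>j. 1 \<le> real n * qq ^ j"
    proof -
      fix j
      have "(r + c) ^ (2 ^ Suc j) \<le> real n * \<nu> ^ (2 ^ Suc j)" by (rule bound)
      then have "1 \<le> real n * \<nu> ^ (2 ^ Suc j) / (r + c) ^ (2 ^ Suc j)"
        using spos by (simp add: field_simps)
      also have "\<dots> = real n * qq ^ (2 ^ Suc j)" by (simp add: qq_def power_divide)
      also have "qq ^ (2 ^ Suc j) \<le> qq ^ j"
      proof (rule power_decreasing)
        have "j < 2 ^ j" by (rule less_exp)
        then show "j \<le> 2 ^ Suc j" by (simp, linarith)
      qed (use q0 q1 in auto)
      then have "real n * qq ^ (2 ^ Suc j) \<le> real n * qq ^ j" by (intro mult_left_mono) auto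
      finally show "1 \<le> real n * qq ^ j" .
    qed
    obtain j where "qq ^ j < 1 / real n" using real_arch_pow_inv[of "1 / real n" qq] n q1 by auto
    then have "real n * qq ^ j < 1" using n by (simp add: field_simps)
    with all[of j] show False by simp
  qed
  then have "es ! k \<ge> r" using k by simp
  then show ?thesis using k by blast
qed



theorem mainTheorem3:
  fixes n :: nat and E :: "nat \<Rightarrow> nat \<Rightarrow> bool"
  assumes "simple_graph n E"
    and "card (edges n E) \<ge> 1"
  shows "estrada_index n E >
           exp (randic_half n E / real (card (edges n E))) + (real n - 1)
           - randic_half n E / real (card (edges n E))"
proof -
  note G = assms(1)
  define A where "A = adj_matrix n E"
  define m where "m = card (edges n E)"
  define R where "R = randic_half n E"
  define r where "r = R / real m"
  define d where "d = (\<lambda>i. degree n E i)"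
  have m1: "m \<ge> 1" using assms(2) by (simp add: m_def)
  have Ac: "A \<in> carrier_mat n n" unfolding A_def by (rule adj_carrier)
  have AS: "transpose_mat A = A" unfolding A_def by (rule adj_sym[OF G])
  obtain es where len: "length es = n" and cp: "char_poly A = (\<Prod>a\<leftarrow>es. [:-a,1:])"
    using sym_factor[OF Ac AS] by blast
  have EE: "estrada_index n E = (\<Sum>i<n. exp (es ! i))"
  proof -
    have "estrada_index n E = (\<Sum>x\<in>#mset es. exp x)"
      unfolding estrada_index_def adj_eigenvalues_def A_def[symmetric] cp proots_lin ..
    also have "\<dots> = sum_list (map exp es)" by (simp only: mset_map[symmetric] sum_mset_sum_list)
    also have "\<dots> = (\<Sum>i<n. exp (es ! i))" by (simp add: sum_list_sum_nth len atLeast0LessThan)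
    finally show ?thesis .
  qed
  have ne: "edges n E \<noteq> {}" using m1 unfolding m_def by auto
  then obtain i0 j0 where e0: "(i0, j0) \<in> edges n E" by auto
  then have n0: "n > 0" by (auto simp: edges_def)
  have fin: "finite (edges n E)" by (rule edges_finite)
  define x where "x = (\<lambda>i. sqrt (real (d i)))"
  have nnx: "nn n x = 2 * real m"
  proof -
    have "nn n x = (\<Sum>i<n. real (d i))" unfolding nn_def x_def by simp
    also have "\<dots> = (\<Sum>i<n. \<Sum>j<n. if E i j then 1 else 0)" unfolding d_def by (simp add: deg_sum)
    also have "\<dots> = 2 * (\<Sum>p\<in>edges n E. 1)" by (rule sum_edges[OF G]) simp
    also have "\<dots> = 2 * real m" by (simp add: m_def)
    finally show ?thesis .
  qed
  have qfx: "qf n A x = 2 * R"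
  proof -
    have "qf n A x = (\<Sum>i<n. \<Sum>j<n. if E i j then sqrt (real (d i * d j)) else 0)"
      unfolding qf_def
    proof (intro sum.cong refl)
      fix i j assume "i \<in> {..<n}" "j \<in> {..<n}"
      then show "x i * A $$ (i,j) * x j = (if E i j then sqrt (real (d i * d j)) else 0)"
        by (simp add: A_def adj_entry x_def real_sqrt_mult)
    qed
    also have "\<dots> = 2 * (\<Sum>p\<in>edges n E. sqrt (real (d (fst p) * d (snd p))))"
      by (rule sum_edges[OF G]) (simp add: mult.commute)
    also have "(\<Sum>p\<in>edges n E. sqrt (real (d (fst p) * d (snd p)))) = R"
      unfolding R_def randic_half_def d_def by (simp add: split_def)
    finally show ?thesis .
  qed
  have Rpos: "R > 0"
  proof -
    have pos: "\<And>p. p \<in> edges n E \<Longrightarrow> 0 < sqrt (real (d (fst p) * d (snd p)))"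
    proof -
      fix p assume p: "p \<in> edges n E"
      obtain i j where pij: "p = (i,j)" by (cases p)
      have ij: "i < n" "j < n" "E i j" using p pij by (auto simp: edges_def)
      have eji: "E j i" using G ij(3) unfolding simple_graph_def by blast
      have "j \<in> {j. j < n \<and> E i j}" using ij by simp
      then have "d i > 0" unfolding d_def degree_def by (subst card_gt_0_iff) auto
      moreover have "i \<in> {i. i < n \<and> E j i}" using ij eji by simp
      then have "d j > 0" unfolding d_def degree_def by (subst card_gt_0_iff) auto
      ultimately show "0 < sqrt (real (d (fst p) * d (snd p)))" using pij by simp
    qed
    have "0 < (\<Sum>p\<in>edges n E. sqrt (real (d (fst p) * d (snd p))))"
      by (rule sum_pos2[OF fin e0]) (use pos e0 in \<open>auto intro: less_imp_le\<close>)
    also have "(\<Sum>p\<in>edges n E. sqrt (real (d (fst p) * d (snd p)))) = R"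
      unfolding R_def randic_half_def d_def by (simp add: split_def)
    finally show ?thesis .
  qed
  have rpos: "r > 0" using Rpos m1 by (simp add: r_def)
  have qr: "qf n A x = r * nn n x" using qfx nnx m1 by (simp add: r_def)
  have nnpos: "nn n x > 0" using nnx m1 by simp
  obtain k where k: "k < n" "es ! k \<ge> r"
    using eig_max[OF Ac AS cp len n0 qr nnpos] rpos by auto
  have tr: "(\<Sum>i<n. es ! i) = 0"
  proof -
    have "(\<Sum>i<n. es ! i) = mtr A" by (rule eig_trace[OF Ac cp len])
    also have "\<dots> = (\<Sum>i<n. A $$ (i,i))" using Ac by (simp add: mtr_def)
    also have "\<dots> = 0" by (intro sum.neutral ballI) (simp add: A_def adj_diag[OF G])
    finally show ?thesis .
  qed
  let ?I = "{..<n} - {k}"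
  have finI: "finite ?I" by simp
  have cardI: "real (card ?I) = real n - 1" using k(1) by (simp add: of_nat_diff)
  have s1: "(\<Sum>i<n. exp (es ! i)) = exp (es ! k) + (\<Sum>i\<in>?I. exp (es ! i))"
    using k(1) by (subst sum.remove[of _ k]) auto
  have s2: "(\<Sum>i\<in>?I. es ! i) = - es ! k"
  proof -
    have "(\<Sum>i<n. es ! i) = es ! k + (\<Sum>i\<in>?I. es ! i)"
      using k(1) by (subst sum.remove[of _ k]) auto
    then show ?thesis using tr by simp
  qed
  have s3: "(\<Sum>i\<in>?I. 1 + es ! i) = real n - 1 - es ! k"
    using cardI s2 by (simp add: sum.distrib)
  have strict: "(\<Sum>i\<in>?I. 1 + es ! i) < (\<Sum>i\<in>?I. exp (es ! i))"
  proof (cases "\<exists>i\<in>?I. es ! i \<noteq> 0")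
    case True
    then obtain i where i: "i \<in> ?I" "es ! i \<noteq> 0" by blast
    show ?thesis
      by (rule sum_strict_mono_ex1[OF finI]) (use i exp_strict in auto)
  next
    case False
    then have "(\<Sum>i\<in>?I. es ! i) = 0" by simp
    then have "es ! k = 0" using s2 by simp
    then show ?thesis using k(2) rpos by simp
  qed
  have mono: "exp r - r \<le> exp (es ! k) - es ! k"
  proof -
    define t where "t = es ! k - r"
    have t0: "t \<ge> 0" using k(2) by (simp add: t_def)
    have "exp (es ! k) = exp r * exp t" by (simp add: t_def flip: exp_add)
    also have "exp r * exp t \<ge> exp r * (1 + t)"
      by (intro mult_left_mono exp_ge_add_one_self) simp
    finally have "exp (es ! k) \<ge> exp r + exp r * t" by (simp add: algebra_simps)
    moreover have "exp r * t \<ge> t"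
    proof -
      have "1 \<le> exp r" using rpos by simp
      from mult_right_mono[OF this t0] show ?thesis by simp
    qed
    ultimately show ?thesis by (simp add: t_def)
  qed
  have "estrada_index n E = exp (es ! k) + (\<Sum>i\<in>?I. exp (es ! i))" using EE s1 by simp
  also have "\<dots> > exp (es ! k) + (real n - 1 - es ! k)" using strict s3 by simp
  finally have "estrada_index n E > exp r + (real n - 1) - r" using mono by simp
  then show ?thesis by (simp add: r_def R_def m_def)
qed

end
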